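(* Let $H$ be a separable complex Hilbert space and $T:H\to H$ a hyponormal operator, i.e. $\|T^*h\|\le\|Th\|$ for every $h\in H$. If $T$ is recurrent, then $T$ is unitary.
   Context: $T$ is recurrent if for every non-empty open $U\subset H$ there is a positive integer $k$ with $U\cap T^{-k}(U)\neq\emptyset$. *)

theory Defs
  imports "HOL-Analysis.Analysis"
begin

text \<open>HOL-Analysis has no complex inner product spaces, so we introduce the
standard notion: a real normed vector space carrying a complex scalar
multiplication (compatible with the real one) and a complex inner product
(conjugate-linear in the first argument) that induces the norm.\<close>

class complex_inner = real_normed_vector +
  fixes scaleC :: "complex \<Rightarrow> 'a \<Rightarrow> 'a"
    and cinner :: "'a \<Rightarrow> 'a \<Rightarrow> complex"
  assumes scaleC_add_right: "scaleC a (x + y) = scaleC a x + scaleC a y"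
    and scaleC_add_left: "scaleC (a + b) x = scaleC a x + scaleC b x"
    and scaleC_scaleC: "scaleC a (scaleC b x) = scaleC (a * b) x"
    and scaleC_one: "scaleC 1 x = x"
    and scaleR_scaleC: "scaleR r x = scaleC (complex_of_real r) x"
    and cinner_commute: "cinner x y = cnj (cinner y x)"
    and cinner_add_left: "cinner (x + y) z = cinner x z + cinner y z"
    and cinner_scaleC_left: "cinner (scaleC a x) y = cnj a * cinner x y"
    and cinner_nonneg: "Im (cinner x x) = 0 \<and> 0 \<le> Re (cinner x x)"
    and cinner_eq_zero: "cinner x x = 0 \<longleftrightarrow> x = 0"
    and norm_cinner: "norm x = sqrt (Re (cinner x x))"

definition bounded_clinear :: "('a::complex_inner \<Rightarrow> 'b::complex_inner) \<Rightarrow> bool" where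
  "bounded_clinear T \<longleftrightarrow>
     (\<forall>x y. T (x + y) = T x + T y) \<and>
     (\<forall>a x. T (scaleC a x) = scaleC a (T x)) \<and>
     (\<exists>K. \<forall>x. norm (T x) \<le> norm x * K)"

definition is_adjoint :: "('a::complex_inner \<Rightarrow> 'a) \<Rightarrow> ('a \<Rightarrow> 'a) \<Rightarrow> bool" where
  "is_adjoint T S \<longleftrightarrow> (\<forall>x y. cinner (T x) y = cinner x (S y))"

definition adj :: "('a::complex_inner \<Rightarrow> 'a) \<Rightarrow> ('a \<Rightarrow> 'a)" where
  "adj T = (THE S. is_adjoint T S)"

definition separable :: "'a::topological_space set \<Rightarrow> bool" where
  "separable S \<longleftrightarrow> (\<exists>D. countable D \<and> D \<subseteq> S \<and> S \<subseteq> closure D)"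

definition hyponormal :: "('a::complex_inner \<Rightarrow> 'a) \<Rightarrow> bool" where
  "hyponormal T \<longleftrightarrow> (\<forall>h. norm (adj T h) \<le> norm (T h))"

definition recurrent :: "('a::topological_space \<Rightarrow> 'a) \<Rightarrow> bool" where
  "recurrent T \<longleftrightarrow>
     (\<forall>U. open U \<and> U \<noteq> {} \<longrightarrow> (\<exists>k::nat. k > 0 \<and> U \<inter> (T ^^ k) -` U \<noteq> {}))"

definition unitary :: "('a::complex_inner \<Rightarrow> 'a) \<Rightarrow> bool" where
  "unitary T \<longleftrightarrow> adj T \<circ> T = id \<and> T \<circ> adj T = id"

end

theory Submission
  imports Defs
begin


lemma cinner_zero_left[simp]: "cinner (0::'a::complex_inner) y = 0"
proof -
  have "cinner (0+0::'a) y = cinner 0 y + cinner 0 y" by (rule cinner_add_left)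
  thus ?thesis by simp
qed

lemma cinner_minus_left: "cinner (- x::'a::complex_inner) y = - cinner x y"
proof -
  have "cinner (x + - x) y = cinner x y + cinner (-x) y" by (rule cinner_add_left)
  thus ?thesis by (simp add: eq_neg_iff_add_eq_0 add.commute)
qed

lemma cinner_diff_left: "cinner (x - z::'a::complex_inner) y = cinner x y - cinner z y"
  using cinner_add_left[of x "-z" y] cinner_minus_left[of z y] by simp

lemma cinner_add_right: "cinner (x::'a::complex_inner) (y + z) = cinner x y + cinner x z"
  by (metis cinner_commute cinner_add_left complex_cnj_add)

lemma cinner_diff_right: "cinner (x::'a::complex_inner) (y - z) = cinner x y - cinner x z"
  by (metis cinner_commute cinner_diff_left complex_cnj_diff)

lemma cinner_zero_right[simp]: "cinner (x::'a::complex_inner) 0 = 0"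
  by (metis cinner_commute cinner_zero_left complex_cnj_zero)


lemma cinner_scaleC_right: "cinner (x::'a::complex_inner) (scaleC a y) = a * cinner x y"
  by (metis cinner_commute cinner_scaleC_left complex_cnj_cnj complex_cnj_mult)

lemma scaleC_zero_right[simp]: "scaleC a (0::'a::complex_inner) = 0"
  by (metis add_cancel_right_right scaleC_add_right add_0)

lemma cinner_self: "cinner (x::'a::complex_inner) x = complex_of_real ((norm x)^2)"
  using cinner_nonneg[of x] norm_cinner[of x] by (simp add: complex_eq_iff)

lemma norm_sq: "(norm (x::'a::complex_inner))^2 = Re (cinner x x)"
  using cinner_self[of x] by simp

lemma norm_add_sq: "(norm (x + y::'a::complex_inner))^2 = (norm x)^2 + (norm y)^2 + 2 * Re (cinner x y)"
proof -
  have "cinner (x+y) (x+y) = cinner x x + cinner y y + (cinner x y + cnj (cinner x y))"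
    by (simp add: cinner_add_left cinner_add_right cinner_commute[of y x])
  hence "Re (cinner (x+y) (x+y)) = Re (cinner x x) + Re (cinner y y) + 2 * Re (cinner x y)" by simp
  thus ?thesis by (simp add: norm_sq)
qed

lemma norm_diff_sq: "(norm (x - y::'a::complex_inner))^2 = (norm x)^2 + (norm y)^2 - 2 * Re (cinner x y)"
proof -
  have "cinner (x-y) (x-y) = cinner x x + cinner y y - (cinner x y + cnj (cinner x y))"
    by (simp add: cinner_diff_left cinner_diff_right cinner_commute[of y x])
  hence "Re (cinner (x-y) (x-y)) = Re (cinner x x) + Re (cinner y y) - 2 * Re (cinner x y)" by simp
  thus ?thesis by (simp add: norm_sq)
qed

lemma norm_scaleC: "norm (scaleC a (x::'a::complex_inner)) = cmod a * norm x"
proof -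
  have "cinner (scaleC a x) (scaleC a x) = cnj a * a * cinner x x"
    by (simp add: cinner_scaleC_left cinner_scaleC_right)
  also have "cnj a * a = complex_of_real ((cmod a)^2)"
    by (metis complex_norm_square mult.commute of_real_power)
  finally have "cinner (scaleC a x) (scaleC a x) = complex_of_real ((cmod a)^2) * cinner x x" .
  hence "complex_of_real ((norm (scaleC a x))^2) = complex_of_real ((cmod a * norm x)^2)"
    unfolding cinner_self by (simp add: power_mult_distrib)
  hence "(norm (scaleC a x))^2 = (cmod a * norm x)^2" using of_real_eq_iff by blast
  thus ?thesis
    using power2_eq_iff_nonneg[of "norm (scaleC a x)" "cmod a * norm x"] by simp
qed

lemma cauchy_schwarz: "cmod (cinner (x::'a::complex_inner) y) \<le> norm x * norm y"
proof (cases "x = 0")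
  case True thus ?thesis by simp
next
  case False
  define c where "c = cinner x y / cinner x x"
  define z where "z = y - scaleC c x"
  have xx: "cinner x x \<noteq> 0" using False cinner_eq_zero by blast
  have "cinner x z = 0"
    unfolding z_def by (simp add: cinner_diff_right cinner_scaleC_right c_def xx)
  hence zx: "cinner z (scaleC c x) = 0"
    by (metis cinner_commute cinner_scaleC_right complex_cnj_zero mult_zero_right)
  have "y = z + scaleC c x" unfolding z_def by simp
  hence "(norm y)^2 = (norm z)^2 + (norm (scaleC c x))^2"
    using norm_add_sq[of z "scaleC c x"] zx by simp
  hence "(cmod c * norm x)^2 \<le> (norm y)^2" by (simp add: norm_scaleC)
  hence "cmod c * norm x \<le> norm y" using power2_le_imp_le by fastforce
  moreover have "cmod c = cmod (cinner x y) / (norm x)^2"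
    by (simp add: c_def cinner_self norm_divide norm_power)
  moreover have "norm x > 0" using False by simp
  ultimately have "cmod (cinner x y) / norm x \<le> norm y"
    by (simp add: power2_eq_square)
  thus ?thesis using \<open>norm x > 0\<close> by (simp add: divide_le_eq mult.commute)
qed



lemma riesz:
  fixes f :: "'a::{complex_inner,complete_space} \<Rightarrow> complex"
  assumes add: "\<And>x y. f (x + y) = f x + f y"
    and sc: "\<And>a x. f (scaleC a x) = a * f x"
    and bnd: "\<And>x. cmod (f x) \<le> norm x * K"
  shows "\<exists>z. \<forall>x. f x = cinner z x"
proof (cases "\<forall>x. f x = 0")
  case True
  thus ?thesis by (intro exI[of _ 0]) simp
next
  case False
  have scR: "f (scaleR r x) = scaleR r (f x)" for r x
    by (simp add: scaleR_scaleC sc scaleR_conv_of_real)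
  have bl: "bounded_linear f"
    by (rule bounded_linear_intro[where K=K]) (use add scR bnd in auto)
  have f0: "f 0 = 0" using bl linear_0 bounded_linear.linear by blast
  have fdiff: "f (x - y) = f x - f y" for x y using bl by (simp add: linear_diff bounded_linear.linear)
  from False obtain x0 where x0: "f x0 \<noteq> 0" by blast
  define A where "A = {x. f x = 1}"
  have x1A: "scaleC (inverse (f x0)) x0 \<in> A" using x0 by (simp add: A_def sc)
  define d where "d = Inf (norm ` A)"
  have bdd: "bdd_below (norm ` A)" by (rule bdd_belowI[of _ 0]) auto
  have dle: "d \<le> norm x" if "x \<in> A" for x
    unfolding d_def using bdd that by (simp add: cInf_lower)
  have d0: "0 \<le> d" unfolding d_def using x1A by (intro cInf_greatest) auto
  have dless: "\<exists>x\<in>A. norm x < d + e" if "e > 0" for e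
  proof -
    have "Inf (norm ` A) < d + e" using that d_def by simp
    then obtain y where "y \<in> norm ` A" "y < d + e"
      using cInf_lessD[of "norm ` A"] x1A by blast
    thus ?thesis by auto
  qed
  define eps where "eps n = inverse (real (Suc n))" for n
  have eps_pos: "eps n > 0" for n by (simp add: eps_def)
  have eps_le1: "eps n \<le> 1" for n by (simp add: eps_def inverse_le_1_iff)
  have eps_mono: "eps m \<le> eps n" if "n \<le> m" for m n
    using that by (simp add: eps_def le_imp_inverse_le)
  have "\<forall>n. \<exists>x. x \<in> A \<and> norm x < d + eps n" using dless eps_pos by blast
  then obtain X where X: "\<And>n. X n \<in> A" "\<And>n. norm (X n) < d + eps n" by metis
  have mid: "(norm (u - v))^2 \<le> 2 * (norm u)^2 + 2 * (norm v)^2 - 4 * d^2"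
    if "u \<in> A" "v \<in> A" for u v
  proof -
    have "scaleR (1/2) (u + v) \<in> A" using that by (simp add: A_def scR add scaleR_conv_of_real)
    hence "d \<le> norm (scaleR (1/2) (u + v))" by (rule dle)
    hence "2 * d \<le> norm (u + v)" by simp
    hence "(2 * d)^2 \<le> (norm (u + v))^2" using d0 by (intro power_mono) auto
    thus ?thesis using norm_add_sq[of u v] norm_diff_sq[of u v] by (simp add: power_mult_distrib)
  qed
  have cauchy: "Cauchy X"
  proof (rule CauchyI)
    fix e :: real assume e: "e > 0"
    have "e^2 / (4 * (2 * d + 1)) > 0" using e d0 by simp
    then obtain N where N: "inverse (real (Suc N)) < e^2 / (4 * (2 * d + 1))"
      using reals_Archimedean by blast
    have "norm (X m - X n) < e" if "m \<ge> N" "n \<ge> N" for m n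
    proof -
      have "norm (X m) \<le> d + eps N" using X(2)[of m] eps_mono[OF that(1)] by linarith
      hence m2: "(norm (X m))^2 \<le> (d + eps N)^2" by (intro power_mono) auto
      have "norm (X n) \<le> d + eps N" using X(2)[of n] eps_mono[OF that(2)] by linarith
      hence n2: "(norm (X n))^2 \<le> (d + eps N)^2" by (intro power_mono) auto
      have "(norm (X m - X n))^2 \<le> 4 * (d + eps N)^2 - 4 * d^2"
        using mid[OF X(1) X(1), of m n] m2 n2 by linarith
      also have "\<dots> = 4 * eps N * (2 * d + eps N)" by (simp add: power2_eq_square algebra_simps)
      also have "\<dots> \<le> 4 * eps N * (2 * d + 1)"
        using eps_pos[of N] eps_le1[of N] by (intro mult_left_mono) auto
      also have "\<dots> < e^2"
        using N d0 by (simp add: eps_def field_simps)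
      finally have "(norm (X m - X n))^2 < e^2" .
      thus ?thesis using e by (simp add: power_less_imp_less_base)
    qed
    thus "\<exists>M. \<forall>m\<ge>M. \<forall>n\<ge>M. norm (X m - X n) < e" by blast
  qed
  then obtain z0 where lim: "X \<longlonglongrightarrow> z0" using Cauchy_convergent_iff convergent_def by blast
  have "(\<lambda>n. f (X n)) \<longlonglongrightarrow> f z0" using bl lim by (rule bounded_linear.tendsto)
  moreover have "(\<lambda>n. f (X n)) = (\<lambda>n. 1)" using X(1) by (auto simp: A_def)
  ultimately have fz0: "f z0 = 1" using LIMSEQ_unique tendsto_const by metis
  have "norm z0 \<le> d"
  proof (rule tendsto_le[OF _ _ tendsto_norm[OF lim]])
    show "(\<lambda>n. d + eps n) \<longlonglongrightarrow> d" unfolding eps_def by (rule LIMSEQ_inverse_real_of_nat_add)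
    show "eventually (\<lambda>n. norm (X n) \<le> d + eps n) sequentially"
      using X(2) by (simp add: less_imp_le)
  qed simp
  hence zmin: "norm z0 \<le> norm w" if "w \<in> A" for w using dle[OF that] by linarith
  have orth: "cinner z0 n = 0" if fn: "f n = 0" for n
  proof (rule ccontr)
    define w where "w = cinner z0 n"
    assume "cinner z0 n \<noteq> 0"
    hence W: "cmod w > 0" by (simp add: w_def)
    define s where "s = 1 / ((norm n)^2 + 1)"
    have n1: "(norm n)^2 + 1 > 0" by (simp add: add_nonneg_pos)
    have s: "s > 0" using n1 by (simp add: s_def)
    have sN: "s * (norm n)^2 < 1" using n1 by (simp add: s_def field_simps)
    define t where "t = - (complex_of_real s * cnj w)"
    have "z0 + scaleC t n \<in> A" using fz0 fn by (simp add: A_def add sc)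
    hence "norm z0 \<le> norm (z0 + scaleC t n)" by (rule zmin)
    hence "(norm z0)^2 \<le> (norm (z0 + scaleC t n))^2" by (intro power_mono) auto
    also have "\<dots> = (norm z0)^2 + (cmod t * norm n)^2 + 2 * Re (t * w)"
      by (simp add: norm_add_sq norm_scaleC cinner_scaleC_right w_def)
    finally have ineq: "0 \<le> (cmod t * norm n)^2 + 2 * Re (t * w)" by simp
    have ct: "cmod t = s * cmod w" using s by (simp add: t_def norm_mult)
    have tw: "Re (t * w) = - (s * (cmod w)^2)"
    proof -
      have "t * w = - (complex_of_real s * (cnj w * w))" by (simp add: t_def)
      also have "cnj w * w = complex_of_real ((cmod w)^2)"
        by (metis complex_norm_square mult.commute of_real_power)
      finally show ?thesis by simp
    qed
    have "(cmod t * norm n)^2 = s * (cmod w)^2 * (s * (norm n)^2)"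
      by (simp add: ct power_mult_distrib power2_eq_square)
    also have "\<dots> < s * (cmod w)^2 * 1"
      using sN s W by (intro mult_strict_left_mono) auto
    finally have "(cmod t * norm n)^2 < s * (cmod w)^2" by simp
    with ineq tw have "0 < - (s * (cmod w)^2)" by linarith
    moreover have "s * (cmod w)^2 > 0" using s W by simp
    ultimately show False by linarith
  qed
  have z0ne: "z0 \<noteq> 0" using fz0 f0 by auto
  define c where "c = cinner z0 z0"
  have c0: "c \<noteq> 0" using z0ne by (simp add: c_def cinner_eq_zero)
  have key: "cinner z0 x = f x * c" for x
  proof -
    have "f (x - scaleC (f x) z0) = 0" using fz0 by (simp add: fdiff sc)
    hence "cinner z0 (x - scaleC (f x) z0) = 0" by (rule orth)
    thus ?thesis by (simp add: cinner_diff_right cinner_scaleC_right c_def)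
  qed
  show ?thesis
  proof (intro exI allI)
    fix x
    have "cinner (scaleC (inverse (cnj c)) z0) x = inverse c * (f x * c)"
      by (simp add: cinner_scaleC_left key)
    also have "\<dots> = f x" using c0 by simp
    finally show "f x = cinner (scaleC (inverse (cnj c)) z0) x" by simp
  qed
qed



lemma bclin_bl:
  assumes "bounded_clinear (T::'a::complex_inner \<Rightarrow> 'a)"
  shows "bounded_linear T"
proof -
  from assms obtain K where add: "\<And>x y. T (x + y) = T x + T y"
    and sc: "\<And>a x. T (scaleC a x) = scaleC a (T x)" and K: "\<And>x. norm (T x) \<le> norm x * K"
    unfolding bounded_clinear_def by blast
  show ?thesis
    by (rule bounded_linear_intro[where K=K]) (use add K in \<open>auto simp: scaleR_scaleC sc\<close>)
qed

lemma adjoint_unique: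
  assumes "is_adjoint (T::'a::complex_inner \<Rightarrow> 'a) S" "is_adjoint T S'"
  shows "S = S'"
proof
  fix y
  have eq: "cinner x (S y) = cinner x (S' y)" for x
    using assms unfolding is_adjoint_def by metis
  define d where "d = S y - S' y"
  have "cinner d d = cinner d (S y) - cinner d (S' y)" unfolding d_def by (rule cinner_diff_right)
  hence "cinner d d = 0" by (simp add: eq)
  thus "S y = S' y" using cinner_eq_zero[of d] d_def by simp
qed

lemma adj_is_adjoint:
  assumes "bounded_clinear (T::'a::{complex_inner,complete_space} \<Rightarrow> 'a)"
  shows "is_adjoint T (adj T)"
proof -
  from assms obtain K where add: "\<And>x y. T (x + y) = T x + T y"
    and sc: "\<And>a x. T (scaleC a x) = scaleC a (T x)" and K: "\<And>x. norm (T x) \<le> norm x * K"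
    unfolding bounded_clinear_def by blast
  have "\<exists>z. \<forall>x. cinner y (T x) = cinner z x" for y
  proof (rule riesz[where K="norm y * K"])
    show "cinner y (T (x + x')) = cinner y (T x) + cinner y (T x')" for x x'
      by (simp add: add cinner_add_right)
    show "cinner y (T (scaleC a x)) = a * cinner y (T x)" for a x
      by (simp add: sc cinner_scaleC_right)
    show "cmod (cinner y (T x)) \<le> norm x * (norm y * K)" for x
    proof -
      have "cmod (cinner y (T x)) \<le> norm y * norm (T x)" by (rule cauchy_schwarz)
      also have "\<dots> \<le> norm y * (norm x * K)" using K by (simp add: mult_left_mono)
      finally show ?thesis by (simp add: algebra_simps)
    qed
  qed
  then obtain S where S: "\<And>y x. cinner y (T x) = cinner (S y) x" by metis
  have adjS: "is_adjoint T S" unfolding is_adjoint_def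
  proof (intro allI)
    fix x y
    have "cinner (T x) y = cnj (cinner y (T x))" by (rule cinner_commute)
    also have "\<dots> = cnj (cinner (S y) x)" by (simp add: S)
    also have "\<dots> = cinner x (S y)" by (metis cinner_commute)
    finally show "cinner (T x) y = cinner x (S y)" .
  qed
  have "adj T = S" unfolding adj_def
    by (rule the_equality[where P="is_adjoint T"], rule adjS, erule adjoint_unique, rule adjS)
  thus ?thesis using adjS by simp
qed

lemma hypo_ineq:
  assumes "bounded_clinear (T::'a::{complex_inner,complete_space} \<Rightarrow> 'a)" "hyponormal T"
  shows "(norm (T x))^2 \<le> norm x * norm (T (T x))"
proof -
  have "(norm (T x))^2 = Re (cinner (T x) (T x))" by (rule norm_sq)
  also have "\<dots> = Re (cinner x (adj T (T x)))"
    using adj_is_adjoint[OF assms(1)] unfolding is_adjoint_def by simp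
  also have "\<dots> \<le> cmod (cinner x (adj T (T x)))" by (rule complex_Re_le_cmod)
  also have "\<dots> \<le> norm x * norm (adj T (T x))" by (rule cauchy_schwarz)
  also have "\<dots> \<le> norm x * norm (T (T x))"
    using assms(2) unfolding hyponormal_def by (simp add: mult_left_mono)
  finally show ?thesis .
qed

lemma funpow_shift: "(T ^^ n) (T y) = (T ^^ Suc n) y"
  by (simp add: funpow_swap1)

lemma iter_up:
  assumes H: "\<And>x. (norm (T x))^2 \<le> norm x * norm (T (T x))"
    and c: "c \<ge> 1" and y: "norm y > 0" and cy: "c * norm y \<le> norm (T y)"
  shows "norm (T y) \<le> norm ((T ^^ Suc k) y)"
  using y cy
proof (induction k arbitrary: y)
  case 0 thus ?case by simp
next
  case (Suc k)
  have Ty: "norm (T y) > 0" using Suc.prems c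
    by (smt (verit) mult_le_cancel_right1)
  have "c * norm y * norm (T y) \<le> norm (T y) * norm (T y)"
    using Suc.prems(2) Ty by (intro mult_right_mono) auto
  also have "\<dots> \<le> norm y * norm (T (T y))" using H[of y] by (simp add: power2_eq_square)
  finally have "norm y * (c * norm (T y)) \<le> norm y * norm (T (T y))" by (simp add: algebra_simps)
  hence cTy: "c * norm (T y) \<le> norm (T (T y))" using Suc.prems(1) by simp
  have "norm (T (T y)) \<le> norm ((T ^^ Suc k) (T y))" using Suc.IH[OF Ty cTy] .
  also have "\<dots> = norm ((T ^^ Suc (Suc k)) y)" by (simp add: funpow_shift)
  finally show ?case using cTy c Ty by (smt (verit) mult_le_cancel_right1)
qed

lemma iter_down:
  assumes H: "\<And>x. (norm (T x))^2 \<le> norm x * norm (T (T x))"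
    and c: "c \<le> 1"
  shows "norm ((T ^^ Suc k) y) \<le> c * norm ((T ^^ k) y) \<Longrightarrow> norm ((T ^^ k) y) > 0 \<Longrightarrow>
     norm (T y) \<le> c * norm y \<and> norm ((T ^^ k) y) \<le> norm y \<and> (0 < k \<longrightarrow> norm ((T ^^ k) y) \<le> norm (T y))"
proof (induction k arbitrary: y)
  case 0 thus ?case by simp
next
  case (Suc k)
  have p1: "norm ((T ^^ Suc k) (T y)) \<le> c * norm ((T ^^ k) (T y))"
    using Suc.prems(1) by (simp add: funpow_shift)
  have p2: "norm ((T ^^ k) (T y)) > 0" using Suc.prems(2) by (simp add: funpow_shift)
  from Suc.IH[OF p1 p2] have I1: "norm (T (T y)) \<le> c * norm (T y)"
    and I2: "norm ((T ^^ k) (T y)) \<le> norm (T y)" by auto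
  have I2': "norm ((T ^^ Suc k) y) \<le> norm (T y)" using I2 by (simp add: funpow_shift)
  have Ty: "norm (T y) > 0" using I2' Suc.prems(2) by linarith
  have "norm (T y) * norm (T y) \<le> norm y * norm (T (T y))" using H[of y] by (simp add: power2_eq_square)
  also have "\<dots> \<le> norm y * (c * norm (T y))" using I1 by (simp add: mult_left_mono)
  finally have "norm (T y) * norm (T y) \<le> (c * norm y) * norm (T y)" by (simp add: algebra_simps)
  hence A1: "norm (T y) \<le> c * norm y" using Ty by simp
  have "c * norm y \<le> norm y" using mult_right_mono[OF c norm_ge_zero[of y]] by simp
  thus ?case using A1 I2' by linarith
qed



lemma isometry:
  fixes T :: "'a::complex_inner \<Rightarrow> 'a"
  assumes bl: "bounded_linear T"
    and H: "\<And>x. (norm (T x))^2 \<le> norm x * norm (T (T x))"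
    and rec: "recurrent T"
  shows "norm (T x) = norm x"
proof (cases "x = 0")
  case True
  thus ?thesis using bl by (simp add: linear_0 bounded_linear.linear)
next
  case False
  define n where "n = norm x"
  have n: "n > 0" using False by (simp add: n_def)
  have cont: "continuous_on UNIV T" using bl by (rule linear_continuous_on)
  have contn: "continuous_on UNIV (\<lambda>y. norm (T y))" by (intro continuous_intros cont)
  have contc: "continuous_on UNIV (\<lambda>y. c * norm y)" for c :: real by (intro continuous_intros)
  have contk: "continuous_on UNIV (\<lambda>y::'a. c)" for c :: real by (intro continuous_intros)
  have contid: "continuous_on UNIV (\<lambda>y::'a. norm y)" by (intro continuous_intros)
  show ?thesis
  proof (rule ccontr)
    assume ne: "norm (T x) \<noteq> norm x"
    define c where "c = (1 + norm (T x) / n) / 2"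
    show False
    proof (cases "norm (T x) > n")
      case True
      have r: "norm (T x) / n > 1" using True n by simp
      hence c1: "c > 1" by (simp add: c_def)
      have cx: "c * n < norm (T x)" using True n by (simp add: c_def field_simps)
      define \<alpha> where "\<alpha> = n * (1 + c) / (2 * c)"
      define \<beta> where "\<beta> = n * (1 + c) / 2"
      have cab: "c * \<alpha> = \<beta>" using c1 by (simp add: \<alpha>_def \<beta>_def field_simps)
      have a0: "\<alpha> > 0" using c1 n by (simp add: \<alpha>_def)
      have an: "\<alpha> < n" using c1 n by (simp add: \<alpha>_def field_simps)
      have nb: "n < \<beta>" using c1 n by (simp add: \<beta>_def field_simps)
      define U where "U = {y. c * norm y < norm (T y) \<and> \<alpha> < norm y \<and> norm y < \<beta>}"
      have "open U" unfolding U_def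
        by (intro open_Collect_conj open_Collect_less contn contc contk contid)
      moreover have "x \<in> U" using cx an nb by (simp add: U_def n_def)
      ultimately obtain k where k: "k > 0" "U \<inter> (T ^^ k) -` U \<noteq> {}"
        using rec unfolding recurrent_def by blast
      then obtain y where y: "y \<in> U" "(T ^^ k) y \<in> U" by blast
      obtain k' where kk: "k = Suc k'" using k(1) gr0_implies_Suc by blast
      have "\<alpha> < norm y" using y(1) by (simp add: U_def)
      hence ny: "norm y > 0" using a0 by linarith
      have "norm (T y) \<le> norm ((T ^^ Suc k') y)"
        by (rule iter_up[where c=c, OF H]) (use c1 y(1) ny in \<open>auto simp: U_def\<close>)
      moreover have "c * \<alpha> < c * norm y" using y(1) c1 by (simp add: U_def)
      ultimately show False using y cab kk by (simp add: U_def)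
    next
      case False
      hence lt: "norm (T x) < n" using ne n_def by simp
      have r: "norm (T x) / n < 1" using lt n by simp
      hence c1: "c < 1" by (simp add: c_def)
      have "norm (T x) / n \<ge> 0" using n by simp
      hence c0: "c > 0" by (simp add: c_def)
      have cx: "norm (T x) < c * n" using lt n by (simp add: c_def field_simps)
      define \<beta> where "\<beta> = n * (1 + c) / (2 * c)"
      define \<alpha> where "\<alpha> = n * (1 + c) / 2"
      have cab: "c * \<beta> = \<alpha>" using c0 by (simp add: \<alpha>_def \<beta>_def field_simps)
      have a0: "\<alpha> > 0" using c0 n by (simp add: \<alpha>_def add_pos_pos)
      have an: "\<alpha> < n" using c1 n by (simp add: \<alpha>_def field_simps)
      have nb: "n < \<beta>" using c1 c0 n by (simp add: \<beta>_def field_simps)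
      define U where "U = {y. norm (T y) < c * norm y \<and> \<alpha> < norm y \<and> norm y < \<beta>}"
      have "open U" unfolding U_def
        by (intro open_Collect_conj open_Collect_less contn contc contk contid)
      moreover have "x \<in> U" using cx an nb by (simp add: U_def n_def)
      ultimately obtain k where k: "k > 0" "U \<inter> (T ^^ k) -` U \<noteq> {}"
        using rec unfolding recurrent_def by blast
      then obtain y where y: "y \<in> U" "(T ^^ k) y \<in> U" by blast
      have p1: "norm ((T ^^ Suc k) y) \<le> c * norm ((T ^^ k) y)"
        using y(2) by (simp add: U_def)
      have "\<alpha> < norm ((T ^^ k) y)" using y(2) by (simp add: U_def)
      hence p2: "norm ((T ^^ k) y) > 0" using a0 by linarith
      from iter_down[OF H _ p1 p2] c1 k(1)
      have d1: "norm (T y) \<le> c * norm y" and d2: "norm ((T ^^ k) y) \<le> norm (T y)" by auto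
      have "c * norm y < c * \<beta>" using y(1) c0 by (simp add: U_def)
      thus False using d1 d2 cab y(2) by (simp add: U_def)
    qed
  qed
qed

lemma dense_range:
  assumes rec: "recurrent T"
  shows "closure (range T) = UNIV"
proof (rule ccontr)
  assume "closure (range T) \<noteq> UNIV"
  define U where "U = - closure (range T)"
  have "open U" unfolding U_def by (simp add: open_Compl)
  moreover have "U \<noteq> {}" using \<open>closure (range T) \<noteq> UNIV\<close> by (auto simp: U_def)
  ultimately obtain k where k: "k > 0" "U \<inter> (T ^^ k) -` U \<noteq> {}"
    using rec unfolding recurrent_def by blast
  then obtain y where y: "(T ^^ k) y \<in> U" by blast
  obtain k' where kk: "k = Suc k'" using k(1) gr0_implies_Suc by blast
  have "(T ^^ k) y = T ((T ^^ k') y)" by (simp add: kk)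
  hence "(T ^^ k) y \<in> closure (range T)" using closure_subset by fastforce
  thus False using y by (simp add: U_def)
qed

lemma surj_isometry:
  fixes T :: "'a::{real_normed_vector,complete_space} \<Rightarrow> 'a"
  assumes bl: "bounded_linear T" and iso: "\<And>x. norm (T x) = norm x"
    and dense: "closure (range T) = UNIV"
  shows "surj T"
proof -
  have "complete (T ` UNIV)"
    by (rule complete_isometric_image[of 1]) (use bl iso in \<open>auto simp: complete_UNIV\<close>)
  hence "closed (range T)" by (rule complete_imp_closed)
  thus ?thesis using dense closure_closed by metis
qed

theorem proposition8p3:
  fixes T :: "'a::{complex_inner, complete_space} \<Rightarrow> 'a"
  assumes "separable (UNIV :: 'a set)"
    and "bounded_clinear T"
    and "hyponormal T"
    and "recurrent T"
  shows "unitary T"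
proof -
  have bl: "bounded_linear T" using assms(2) by (rule bclin_bl)
  have H: "(norm (T x))^2 \<le> norm x * norm (T (T x))" for x
    using hypo_ineq[OF assms(2,3)] .
  have iso: "norm (T x) = norm x" for x using isometry[OF bl H assms(4)] .
  have sj: "surj T" using surj_isometry[OF bl iso dense_range[OF assms(4)]] .
  have adjA: "is_adjoint T (adj T)" using adj_is_adjoint[OF assms(2)] .
  have AT: "adj T (T x) = x" for x
  proof -
    have nA: "norm (adj T (T x)) \<le> norm x"
      using assms(3) iso unfolding hyponormal_def by metis
    have "cinner x (adj T (T x)) = cinner (T x) (T x)"
      using adjA unfolding is_adjoint_def by simp
    also have "\<dots> = complex_of_real ((norm x)^2)" by (simp add: cinner_self iso)
    finally have "cinner (adj T (T x)) x = complex_of_real ((norm x)^2)"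
      by (metis cinner_commute complex_cnj_complex_of_real)
    hence "(norm (adj T (T x) - x))^2 = (norm (adj T (T x)))^2 + (norm x)^2 - 2 * (norm x)^2"
      by (simp add: norm_diff_sq)
    also have "\<dots> \<le> 0" using nA by (simp add: power_mono)
    finally have "norm (adj T (T x) - x) = 0" by simp
    thus ?thesis by simp
  qed
  have TA: "T (adj T w) = w" for w
  proof -
    obtain v where "w = T v" using sj by (metis surjD)
    thus ?thesis by (simp add: AT)
  qed
  show ?thesis unfolding unitary_def by (simp add: fun_eq_iff AT TA)
qed


end
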